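(* Under the hypotheses of Theorem 2 (i.e. $\alpha_x,\alpha_y,\alpha_z>1$, $\alpha=\gcd(\alpha_x,\alpha_y,\alpha_z)$, $\beta_y=\alpha_y/\alpha$ odd), for each $i\in\{0,1,2,3\}$ the half-plane operators $X|_{\mathcal D_x^{g_i}}$ and $Z|_{\mathcal D_z^{g_i}}$ commute with every stabilizer generator $S_s$, and, up to multiplication by an element of the stabilizer group $\mathcal S$, $$X|_{\mathcal D_x^{g_i}}=\prod_{j=0}^{\alpha-1}X_{Li}^j,\qquad Z|_{\mathcal D_z^{g_i}}=\prod_{j=0}^{\alpha-1}Z_{Li}^j.$$
   Context: Chamon model: for positive integers $\alpha_x,\alpha_y,\alpha_z$ let $\mathcal A=\mathbb Z_{2\alpha_x}\times\mathbb Z_{2\alpha_y}\times\mathbb Z_{2\alpha_z}$ and $\mathcal D=\{(x,y,z)\in\mathcal A: x+y+z \text{ even}\}$, one qubit per point of $\mathcal D$. With $e_x^{\pm}=(\pm1,0,0)$, $e_y^{\pm}=(0,\pm1,0)$, $e_z^{\pm}=(0,0,\pm1)$, for $s\in\mathcal A\setminus\mathcal D$ the stabilizer generator is $S_s=X_{s+e_x^+}X_{s+e_x^-}Y_{s+e_y^+}Y_{s+e_y^-}Z_{s+e_z^+}Z_{s+e_z^-}$ (single-qubit Paulis, $Y=ZX$); $\mathcal S$ is the group they generate. For $\mathcal D'\subseteq\mathcal D$, $X|_{\mathcal D'}=\prod_{d\in\mathcal D'}X_d$, $Z|_{\mathcal D'}=\prod_{d\in\mathcal D'}Z_d$. Let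 $g_0=(0,0,0)$, $g_1=(1,1,0)$, $g_2=(1,0,1)$, $g_3=(0,1,1)$; half-plane sets $\mathcal D_x^{g_i}=\{g_i+2\lambda e_z^{+}+2\lambda' e_y^{+}:\lambda,\lambda'\in\mathbb Z\}$, $\mathcal D_z^{g_i}=\{g_i+2\lambda e_x^{+}+2\lambda' e_y^{+}:\lambda,\lambda'\in\mathbb Z\}$. Write $\alpha_x=\beta_x\alpha,\alpha_y=\beta_y\alpha,\alpha_z=\beta_z\alpha$; $g_{i,j}=g_i+2je_y^{+}$, $\mu_i=(-1)^{\lfloor i/2\rfloor}$, $\nu_i=(-1)^{\lceil i/2\rceil\bmod 2}$; $\mathcal G_{i,j}^x=\{g_{i,j}+2\lambda\alpha e_y^{+}+2\lambda'\alpha e_z^{+}:0\le\lambda<\beta_y,0\le\lambda'<\beta_z\}$, $\mathcal G_{i,j}^z=\{g_{i,j}+2\lambda\alpha e_y^{+}+2\lambda'\alpha e_x^{+}:0\le\lambda<\beta_y,0\le\lambda'<\beta_x\}$, $\mathcal D_x^{i,j}=\{g+\lambda(\mu_i e_z^{+}+e_y^{+})+\lambda'(\mu_i e_z^{+}+e_y^{-}):0\le\lambda,\lambda'<\alpha,\ g\in\mathcal G_{i,j}^x\}$, $\mathcal D_z^{i,j}=\{g+\lambda(\nu_i e_x^{+}+e_y^{+})+\lambda'(\nu_i e_x^{+}+e_y^{-}):0\le\lambda,\lambda'<\alpha,\ g\in\mathcal G_{i,j}^z\}$; $X_{Li}^j=X|_{\mathcal D_x^{i,j}}$, $Z_{Li}^j=Z|_{\mathcal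 D_z^{i,j}}$ (coordinates modulo $2\alpha_x,2\alpha_y,2\alpha_z$). *)

theory Defs
  imports Main
begin

type_synonym pt = "int \<times> int \<times> int"

definition padd :: "pt \<Rightarrow> pt \<Rightarrow> pt" where
  "padd p q = (fst p + fst q, fst (snd p) + fst (snd q), snd (snd p) + snd (snd q))"

definition psc :: "int \<Rightarrow> pt \<Rightarrow> pt" where
  "psc c p = (c * fst p, c * fst (snd p), c * snd (snd p))"

definition exP :: pt where "exP = (1,0,0)"
definition exM :: pt where "exM = (-1,0,0)"
definition eyP :: pt where "eyP = (0,1,0)"
definition eyM :: pt where "eyM = (0,-1,0)"
definition ezP :: pt where "ezP = (0,0,1)"
definition ezM :: pt where "ezM = (0,0,-1)"

definition red :: "nat \<Rightarrow> nat \<Rightarrow> nat \<Rightarrow> pt \<Rightarrow> pt" where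
  "red ax ay az p = (fst p mod (2 * int ax), fst (snd p) mod (2 * int ay), snd (snd p) mod (2 * int az))"

definition Aset :: "nat \<Rightarrow> nat \<Rightarrow> nat \<Rightarrow> pt set" where
  "Aset ax ay az = {(x,y,z). 0 \<le> x \<and> x < 2 * int ax \<and> 0 \<le> y \<and> y < 2 * int ay
                          \<and> 0 \<le> z \<and> z < 2 * int az}"

definition Dset :: "nat \<Rightarrow> nat \<Rightarrow> nat \<Rightarrow> pt set" where
  "Dset ax ay az = {(x,y,z). (x,y,z) \<in> Aset ax ay az \<and> even (x + y + z)}"

text \<open>A record with ph = k, xs = a, zs = b represents the operator
  i^k * (prod over d in b of Z_d) * (prod over d in a of X_d); phases are kept mod 4.\<close>
record pauli =
  ph :: int
  xs :: "pt set"
  zs :: "pt set"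

definition symdiff :: "'a set \<Rightarrow> 'a set \<Rightarrow> 'a set" where
  "symdiff A B = (A - B) \<union> (B - A)"

text \<open>(Z^{z1} X^{x1})(Z^{z2} X^{x2}) = (-1)^{|x1 \<inter> z2|} Z^{z1+z2} X^{x1+x2}.\<close>
definition pmult :: "pauli \<Rightarrow> pauli \<Rightarrow> pauli" where
  "pmult P Q = \<lparr>ph = (ph P + ph Q + 2 * int (card (xs P \<inter> zs Q))) mod 4,
                xs = symdiff (xs P) (xs Q), zs = symdiff (zs P) (zs Q)\<rparr>"

definition pone :: pauli where "pone = \<lparr>ph = 0, xs = {}, zs = {}\<rparr>"

definition pcommute :: "pauli \<Rightarrow> pauli \<Rightarrow> bool" where
  "pcommute P Q \<longleftrightarrow> pmult P Q = pmult Q P"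

definition pprod :: "pauli list \<Rightarrow> pauli" where
  "pprod ps = foldr pmult ps pone"

definition Xq :: "pt \<Rightarrow> pauli" where "Xq d = \<lparr>ph = 0, xs = {d}, zs = {}\<rparr>"
definition Zq :: "pt \<Rightarrow> pauli" where "Zq d = \<lparr>ph = 0, xs = {}, zs = {d}\<rparr>"
definition Yq :: "pt \<Rightarrow> pauli" where "Yq d = pmult (Zq d) (Xq d)"

definition Xres :: "pt set \<Rightarrow> pauli" where "Xres D' = \<lparr>ph = 0, xs = D', zs = {}\<rparr>"
definition Zres :: "pt set \<Rightarrow> pauli" where "Zres D' = \<lparr>ph = 0, xs = {}, zs = D'\<rparr>"

definition Sgen :: "nat \<Rightarrow> nat \<Rightarrow> nat \<Rightarrow> pt \<Rightarrow> pauli" where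
  "Sgen ax ay az s = (let r = red ax ay az in
     pprod [Xq (r (padd s exP)), Xq (r (padd s exM)),
            Yq (r (padd s eyP)), Yq (r (padd s eyM)),
            Zq (r (padd s ezP)), Zq (r (padd s ezM))])"

text \<open>The group generated by the S_s, s in A \ D (every Pauli has finite order,
  so the generated submonoid is the generated group).\<close>
inductive_set stab :: "nat \<Rightarrow> nat \<Rightarrow> nat \<Rightarrow> pauli set" for ax ay az where
  stab_one: "pone \<in> stab ax ay az"
| stab_mult: "s \<in> Aset ax ay az - Dset ax ay az \<Longrightarrow> P \<in> stab ax ay az
              \<Longrightarrow> pmult (Sgen ax ay az s) P \<in> stab ax ay az"

definition gpt :: "nat \<Rightarrow> pt" where
  "gpt i = (if i = 0 then (0,0,0) else if i = 1 then (1,1,0) else if i = 2 then (1,0,1) else (0,1,1))"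

definition DxHalf :: "nat \<Rightarrow> nat \<Rightarrow> nat \<Rightarrow> nat \<Rightarrow> pt set" where
  "DxHalf ax ay az i = red ax ay az ` {padd (gpt i) (padd (psc (2*l) ezP) (psc (2*l') eyP)) | l l'. True}"

definition DzHalf :: "nat \<Rightarrow> nat \<Rightarrow> nat \<Rightarrow> nat \<Rightarrow> pt set" where
  "DzHalf ax ay az i = red ax ay az ` {padd (gpt i) (padd (psc (2*l) exP) (psc (2*l') eyP)) | l l'. True}"

definition gal :: "nat \<Rightarrow> nat \<Rightarrow> nat \<Rightarrow> nat" where
  "gal ax ay az = gcd (gcd ax ay) az"

definition gij :: "nat \<Rightarrow> nat \<Rightarrow> pt" where
  "gij i j = padd (gpt i) (psc (2 * int j) eyP)"

definition mu :: "nat \<Rightarrow> int" where "mu i = (-1) ^ (i div 2)"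
definition nu :: "nat \<Rightarrow> int" where "nu i = (-1) ^ (((i + 1) div 2) mod 2)"

definition Gx :: "nat \<Rightarrow> nat \<Rightarrow> nat \<Rightarrow> nat \<Rightarrow> nat \<Rightarrow> pt set" where
  "Gx ax ay az i j = (let a = gal ax ay az in
     {padd (gij i j) (padd (psc (2 * int l * int a) eyP) (psc (2 * int l' * int a) ezP)) | l l'.
        l < ay div a \<and> l' < az div a})"

definition Gz :: "nat \<Rightarrow> nat \<Rightarrow> nat \<Rightarrow> nat \<Rightarrow> nat \<Rightarrow> pt set" where
  "Gz ax ay az i j = (let a = gal ax ay az in
     {padd (gij i j) (padd (psc (2 * int l * int a) eyP) (psc (2 * int l' * int a) exP)) | l l'.
        l < ay div a \<and> l' < ax div a})"

definition DxL :: "nat \<Rightarrow> nat \<Rightarrow> nat \<Rightarrow> nat \<Rightarrow> nat \<Rightarrow> pt set" where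
  "DxL ax ay az i j = (let a = gal ax ay az in red ax ay az `
     {padd g (padd (psc (int l) (padd (psc (mu i) ezP) eyP)) (psc (int l') (padd (psc (mu i) ezP) eyM))) | g l l'.
        l < a \<and> l' < a \<and> g \<in> Gx ax ay az i j})"

definition DzL :: "nat \<Rightarrow> nat \<Rightarrow> nat \<Rightarrow> nat \<Rightarrow> nat \<Rightarrow> pt set" where
  "DzL ax ay az i j = (let a = gal ax ay az in red ax ay az `
     {padd g (padd (psc (int l) (padd (psc (nu i) exP) eyP)) (psc (int l') (padd (psc (nu i) exP) eyM))) | g l l'.
        l < a \<and> l' < a \<and> g \<in> Gz ax ay az i j})"

definition XL :: "nat \<Rightarrow> nat \<Rightarrow> nat \<Rightarrow> nat \<Rightarrow> nat \<Rightarrow> pauli" where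
  "XL ax ay az i j = Xres (DxL ax ay az i j)"

definition ZL :: "nat \<Rightarrow> nat \<Rightarrow> nat \<Rightarrow> nat \<Rightarrow> nat \<Rightarrow> pauli" where
  "ZL ax ay az i j = Zres (DzL ax ay az i j)"

end

theory Submission
  imports Defs
begin


lemma symdiff_empty[simp]: "symdiff {} X = X" "symdiff X {} = X"
  by (auto simp: symdiff_def)

lemma pmult_Xres: "pmult (Xres A) (Xres B) = Xres (symdiff A B)"
  by (simp add: pmult_def Xres_def)
lemma pmult_Zres: "pmult (Zres A) (Zres B) = Zres (symdiff A B)"
  by (simp add: pmult_def Zres_def)

lemma pprod_Xres: "pprod (map (\<lambda>j. Xres (F j)) js) = Xres (foldr (\<lambda>j acc. symdiff (F j) acc) js {})"
  by (induction js) (auto simp: pprod_def pone_def Xres_def pmult_Xres[unfolded Xres_def])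
lemma pprod_Zres: "pprod (map (\<lambda>j. Zres (F j)) js) = Zres (foldr (\<lambda>j acc. symdiff (F j) acc) js {})"
  by (induction js) (auto simp: pprod_def pone_def Zres_def pmult_Zres[unfolded Zres_def])

lemma pmult_Xres_one: "pmult (Xres A) pone = Xres A"
  by (simp add: pmult_def Xres_def pone_def)
lemma pmult_Zres_one: "pmult (Zres A) pone = Zres A"
  by (simp add: pmult_def Zres_def pone_def)

lemma foldr_symdiff_mem:
  "distinct js \<Longrightarrow> x \<in> foldr (\<lambda>j acc. symdiff (F j) acc) js {} \<longleftrightarrow> odd (card {j \<in> set js. x \<in> F j})"
proof (induction js)
  case Nil then show ?case by simp
next
  case (Cons j js)
  have e: "{j' \<in> set (j # js). x \<in> F j'} = (if x \<in> F j then insert j {j' \<in> set js. x \<in> F j'} else {j' \<in> set js. x \<in> F j'})"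
    by auto
  have nj: "j \<notin> {j' \<in> set js. x \<in> F j'}" using Cons.prems by auto
  have IH: "x \<in> foldr (\<lambda>j acc. symdiff (F j) acc) js {} \<longleftrightarrow> odd (card {j \<in> set js. x \<in> F j})"
    using Cons by simp
  show ?case
  proof (cases "x \<in> F j")
    case True
    have "card {j' \<in> set (j # js). x \<in> F j'} = Suc (card {j' \<in> set js. x \<in> F j'})"
      unfolding e using True nj by simp
    then show ?thesis using IH True by (simp add: symdiff_def)
  next
    case False
    then show ?thesis using IH unfolding e by (simp add: symdiff_def)
  qed
qed

lemma pcommute_Xres: "even (card (H \<inter> zs Q)) \<Longrightarrow> pcommute (Xres H) Q"
  unfolding pcommute_def pmult_def Xres_def
  by (auto simp: symdiff_def elim!: evenE)
lemma pcommute_Zres: "even (card (xs Q \<inter> H)) \<Longrightarrow> pcommute (Zres H) Q"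
  unfolding pcommute_def pmult_def Zres_def
  by (auto simp: symdiff_def elim!: evenE)

lemma card_even4:
  assumes "A \<noteq> B" "C \<noteq> D" "A \<noteq> C" "A \<noteq> D" "B \<noteq> C" "B \<noteq> D"
    "A \<in> H \<longleftrightarrow> B \<in> H" "C \<in> H \<longleftrightarrow> D \<in> H"
  shows "even (card (H \<inter> symdiff {A} (symdiff {B} (symdiff {C} {D}))))"
proof -
  have s: "symdiff {A} (symdiff {B} (symdiff {C} {D})) = {A,B,C,D}"
    using assms by (auto simp: symdiff_def)
  show ?thesis unfolding s using assms
    by (cases "A \<in> H"; cases "C \<in> H") (auto simp: Int_insert_left)
qed

lemma Sgen_sets:
  "xs (Sgen ax ay az s) = symdiff {red ax ay az (padd s exP)} (symdiff {red ax ay az (padd s exM)}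
      (symdiff {red ax ay az (padd s eyP)} {red ax ay az (padd s eyM)}))"
  "zs (Sgen ax ay az s) = symdiff {red ax ay az (padd s eyP)} (symdiff {red ax ay az (padd s eyM)}
      (symdiff {red ax ay az (padd s ezP)} {red ax ay az (padd s ezM)}))"
  by (simp_all add: Sgen_def Let_def pprod_def pmult_def Xq_def Yq_def Zq_def pone_def)



lemma gpt_cases: "i < 4 \<Longrightarrow> fst (gpt i) \<in> {0,1} \<and> fst (snd (gpt i)) \<in> {0,1} \<and> snd (snd (gpt i)) \<in> {0,1}"
  by (auto simp: gpt_def)

lemma red_triple: "red ax ay az (x,y,z) = (x mod (2*int ax), y mod (2*int ay), z mod (2*int az))"
  by (simp add: red_def)

lemma Aset_iff: "(x,y,z) \<in> Aset ax ay az \<longleftrightarrow> 0 \<le> x \<and> x < 2 * int ax \<and> 0 \<le> y \<and> y < 2 * int ay \<and> 0 \<le> z \<and> z < 2 * int az"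
  by (simp add: Aset_def)

lemma even_mod2n: "even ((y::int) mod (2 * n)) \<longleftrightarrow> even y"
  by (metis dvd_mod_iff dvd_triv_left even_mod_2_iff mod_mod_cancel)

lemma DxHalf_char:
  assumes "ax > 1" "ay > 0" "az > 0" "i < 4" and g: "gpt i = (gx,gy,gz)"
  shows "(x,y,z) \<in> DxHalf ax ay az i \<longleftrightarrow>
     (x,y,z) \<in> Aset ax ay az \<and> x = gx \<and> even (y - gy) \<and> even (z - gz)"
proof
  have gx: "gx \<in> {0,1}" using gpt_cases[OF assms(4)] g by simp
  assume "(x,y,z) \<in> DxHalf ax ay az i"
  then obtain l l' where e: "(x,y,z) = red ax ay az (gx, gy + 2*l', gz + 2*l)"
    unfolding DxHalf_def using g by (auto simp: padd_def psc_def ezP_def eyP_def)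
  then have ex: "x = gx mod (2*int ax)" "y = (gy + 2*l') mod (2*int ay)" "z = (gz + 2*l) mod (2*int az)"
    by (simp_all add: red_triple)
  have "gx mod (2*int ax) = gx" using gx assms(1) by auto
  moreover have "(x,y,z) \<in> Aset ax ay az" using ex assms by (simp add: Aset_iff)
  moreover have "even (y - gy)" using ex(2) even_mod2n[of "gy + 2*l'" "int ay"]
    by simp
  moreover have "even (z - gz)" using ex(3) even_mod2n[of "gz + 2*l" "int az"]
    by simp
  ultimately show "(x,y,z) \<in> Aset ax ay az \<and> x = gx \<and> even (y - gy) \<and> even (z - gz)"
    using ex by simp
next
  assume h: "(x,y,z) \<in> Aset ax ay az \<and> x = gx \<and> even (y - gy) \<and> even (z - gz)"
  then obtain l l' where l: "z - gz = 2*l" "y - gy = 2*l'" by (metis evenE)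
  have "(x,y,z) = red ax ay az (gx, gy + 2*l', gz + 2*l)"
    using h l by (simp add: red_triple Aset_iff)
  moreover have "(gx, gy + 2*l', gz + 2*l) = padd (gpt i) (padd (psc (2*l) ezP) (psc (2*l') eyP))"
    using g by (simp add: padd_def psc_def ezP_def eyP_def)
  ultimately show "(x,y,z) \<in> DxHalf ax ay az i" unfolding DxHalf_def by blast
qed

lemma DzHalf_char:
  assumes "ax > 0" "ay > 0" "az > 1" "i < 4" and g: "gpt i = (gx,gy,gz)"
  shows "(x,y,z) \<in> DzHalf ax ay az i \<longleftrightarrow>
     (x,y,z) \<in> Aset ax ay az \<and> z = gz \<and> even (x - gx) \<and> even (y - gy)"
proof
  have gz: "gz \<in> {0,1}" using gpt_cases[OF assms(4)] g by simp
  assume "(x,y,z) \<in> DzHalf ax ay az i"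
  then obtain l l' where e: "(x,y,z) = red ax ay az (gx + 2*l, gy + 2*l', gz)"
    unfolding DzHalf_def using g by (auto simp: padd_def psc_def exP_def eyP_def)
  then have ex: "x = (gx + 2*l) mod (2*int ax)" "y = (gy + 2*l') mod (2*int ay)" "z = gz mod (2*int az)"
    by (simp_all add: red_triple)
  have "gz mod (2*int az) = gz" using gz assms(3) by auto
  moreover have "(x,y,z) \<in> Aset ax ay az" using ex assms by (simp add: Aset_iff)
  moreover have "even (y - gy)" using ex(2) even_mod2n[of "gy + 2*l'" "int ay"]
    by simp
  moreover have "even (x - gx)" using ex(1) even_mod2n[of "gx + 2*l" "int ax"]
    by simp
  ultimately show "(x,y,z) \<in> Aset ax ay az \<and> z = gz \<and> even (x - gx) \<and> even (y - gy)"
    using ex by simp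
next
  assume h: "(x,y,z) \<in> Aset ax ay az \<and> z = gz \<and> even (x - gx) \<and> even (y - gy)"
  then obtain l l' where l: "x - gx = 2*l" "y - gy = 2*l'" by (metis evenE)
  have "(x,y,z) = red ax ay az (gx + 2*l, gy + 2*l', gz)"
    using h l by (simp add: red_triple Aset_iff)
  moreover have "(gx + 2*l, gy + 2*l', gz) = padd (gpt i) (padd (psc (2*l) exP) (psc (2*l') eyP))"
    using g by (simp add: padd_def psc_def exP_def eyP_def)
  ultimately show "(x,y,z) \<in> DzHalf ax ay az i" unfolding DzHalf_def by blast
qed



lemma mod_pm1_neq: "(n::int) > 2 \<Longrightarrow> (y + 1) mod n \<noteq> (y - 1) mod n"
proof
  assume "n > 2" "(y + 1) mod n = (y - 1) mod n"
  then have "n dvd 2" by (simp add: mod_eq_dvd_iff)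
  then have "n \<le> 2" by (rule zdvd_imp_le) simp
  with \<open>n > 2\<close> show False by simp
qed

lemma mod_p1_neq: "(n::int) > 1 \<Longrightarrow> 0 \<le> y \<Longrightarrow> y < n \<Longrightarrow> (y + 1) mod n \<noteq> y"
proof
  assume "n > 1" "0 \<le> y" "y < n" "(y + 1) mod n = y"
  then have "(y + 1) mod n = y mod n" by simp
  then have "n dvd 1" by (simp add: mod_eq_dvd_iff)
  then have "n \<le> 1" by (rule zdvd_imp_le) simp
  with \<open>n > 1\<close> show False by simp
qed

lemma mod_m1_neq: "(n::int) > 1 \<Longrightarrow> 0 \<le> y \<Longrightarrow> y < n \<Longrightarrow> (y - 1) mod n \<noteq> y"
proof
  assume "n > 1" "0 \<le> y" "y < n" "(y - 1) mod n = y"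
  then have "(y - 1) mod n = y mod n" by simp
  then have "n dvd (y - 1 - y)" by (simp only: mod_eq_dvd_iff)
  then have "n dvd 1" by simp
  then have "n \<le> 1" by (rule zdvd_imp_le) simp
  with \<open>n > 1\<close> show False by simp
qed

lemma commute_X:
  assumes "ax > 1" "ay > 1" "az > 1" "i < 4" and s: "s \<in> Aset ax ay az - Dset ax ay az"
  shows "pcommute (Xres (DxHalf ax ay az i)) (Sgen ax ay az s)"
proof -
  obtain s1 s2 s3 where s0: "s = (s1,s2,s3)" by (cases s) auto
  obtain gx gy gz where g: "gpt i = (gx,gy,gz)" by (cases "gpt i") auto
  have r: "0 \<le> s1" "s1 < 2*int ax" "0 \<le> s2" "s2 < 2*int ay" "0 \<le> s3" "s3 < 2*int az"
    using s unfolding s0 by (auto simp: Aset_iff)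
  let ?H = "DxHalf ax ay az i"
  have p2: "ay > 0" and p3: "az > 0" using assms by auto
  define A where "A = (s1, (s2+1) mod (2*int ay), s3)"
  define B where "B = (s1, (s2-1) mod (2*int ay), s3)"
  define C where "C = (s1, s2, (s3+1) mod (2*int az))"
  define D where "D = (s1, s2, (s3-1) mod (2*int az))"
  have z: "zs (Sgen ax ay az s) = symdiff {A} (symdiff {B} (symdiff {C} {D}))"
    unfolding Sgen_sets s0 A_def B_def C_def D_def using r
    by (simp add: padd_def eyP_def eyM_def ezP_def ezM_def red_triple)
  have n1: "(s2+1) mod (2*int ay) \<noteq> (s2-1) mod (2*int ay)" using assms(2) mod_pm1_neq by simp
  have n2: "(s3+1) mod (2*int az) \<noteq> (s3-1) mod (2*int az)" using assms(3) mod_pm1_neq by simp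
  have n3: "(s3+1) mod (2*int az) \<noteq> s3" using assms(3) mod_p1_neq r by simp
  have n4: "(s3-1) mod (2*int az) \<noteq> s3" using assms(3) mod_m1_neq r by simp
  have inA: "(s1, y, z) \<in> Aset ax ay az" if "0 \<le> y" "y < 2*int ay" "0 \<le> z" "z < 2*int az" for y z
    using r that by (simp add: Aset_iff)
  have eAB: "A \<in> ?H \<longleftrightarrow> B \<in> ?H"
    unfolding A_def B_def DxHalf_char[OF assms(1) p2 p3 assms(4) g] using assms r inA
    by (simp add: even_mod2n)
  have eCD: "C \<in> ?H \<longleftrightarrow> D \<in> ?H"
    unfolding C_def D_def DxHalf_char[OF assms(1) p2 p3 assms(4) g] using assms r inA
    by (simp add: even_mod2n)
  show ?thesis
    apply (rule pcommute_Xres) unfolding z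
    apply (rule card_even4)
    using n1 n2 n3 n4 eAB eCD by (auto simp: A_def B_def C_def D_def)
qed

lemma commute_Z:
  assumes "ax > 1" "ay > 1" "az > 1" "i < 4" and s: "s \<in> Aset ax ay az - Dset ax ay az"
  shows "pcommute (Zres (DzHalf ax ay az i)) (Sgen ax ay az s)"
proof -
  obtain s1 s2 s3 where s0: "s = (s1,s2,s3)" by (cases s) auto
  obtain gx gy gz where g: "gpt i = (gx,gy,gz)" by (cases "gpt i") auto
  have r: "0 \<le> s1" "s1 < 2*int ax" "0 \<le> s2" "s2 < 2*int ay" "0 \<le> s3" "s3 < 2*int az"
    using s unfolding s0 by (auto simp: Aset_iff)
  let ?H = "DzHalf ax ay az i"
  have p1: "ax > 0" and p2: "ay > 0" using assms by auto
  define A where "A = ((s1+1) mod (2*int ax), s2, s3)"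
  define B where "B = ((s1-1) mod (2*int ax), s2, s3)"
  define C where "C = (s1, (s2+1) mod (2*int ay), s3)"
  define D where "D = (s1, (s2-1) mod (2*int ay), s3)"
  have z: "xs (Sgen ax ay az s) = symdiff {A} (symdiff {B} (symdiff {C} {D}))"
    unfolding Sgen_sets s0 A_def B_def C_def D_def using r
    by (simp add: padd_def exP_def exM_def eyP_def eyM_def red_triple)
  have n1: "(s1+1) mod (2*int ax) \<noteq> (s1-1) mod (2*int ax)" using assms(1) mod_pm1_neq by simp
  have n2: "(s2+1) mod (2*int ay) \<noteq> (s2-1) mod (2*int ay)" using assms(2) mod_pm1_neq by simp
  have n3: "(s1+1) mod (2*int ax) \<noteq> s1" using assms(1) mod_p1_neq r by simp
  have n4: "(s1-1) mod (2*int ax) \<noteq> s1" using assms(1) mod_m1_neq r by simp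
  have inA: "(x, y, s3) \<in> Aset ax ay az" if "0 \<le> x" "x < 2*int ax" "0 \<le> y" "y < 2*int ay" for x y
    using r that by (simp add: Aset_iff)
  have eAB: "A \<in> ?H \<longleftrightarrow> B \<in> ?H"
    unfolding A_def B_def DzHalf_char[OF p1 p2 assms(3) assms(4) g] using assms r inA
    by (simp add: even_mod2n)
  have eCD: "C \<in> ?H \<longleftrightarrow> D \<in> ?H"
    unfolding C_def D_def DzHalf_char[OF p1 p2 assms(3) assms(4) g] using assms r inA
    by (simp add: even_mod2n)
  have "even (card (?H \<inter> xs (Sgen ax ay az s)))"
    unfolding z
    apply (rule card_even4)
    using n1 n2 n3 n4 eAB eCD by (auto simp: A_def B_def C_def D_def)
  then show ?thesis by (intro pcommute_Zres) (simp add: Int_commute)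
qed



lemma odd_int_eq: "int n = m \<Longrightarrow> odd n \<longleftrightarrow> odd m" by auto

lemma card_L_parity:
  fixes a::nat and b::int
  assumes "a > 0" "0 \<le> b" "b < 2*int a"
  shows "odd (card {l1::nat. l1 < a \<and> b - int l1 \<ge> 0 \<and> b - int l1 < int a}) \<longleftrightarrow> even b"
proof (cases "b < int a")
  case True
  have "{l1::nat. l1 < a \<and> b - int l1 \<ge> 0 \<and> b - int l1 < int a} = {0..nat b}"
    using True assms by auto
  then have "card {l1::nat. l1 < a \<and> b - int l1 \<ge> 0 \<and> b - int l1 < int a} = Suc (nat b)"
    by simp
  moreover have "even (nat b) \<longleftrightarrow> even b" using assms(2) by (rule even_nat_iff)
  ultimately show ?thesis by simp
next
  case False
  have "{l1::nat. l1 < a \<and> b - int l1 \<ge> 0 \<and> b - int l1 < int a} = {nat (b - int a + 1)..<a}"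
    using False assms by auto
  moreover have "int (card {nat (b - int a + 1)..<a}) = 2 * int a - 1 - b"
    using False assms by simp
  ultimately have "int (card {l1::nat. l1 < a \<and> b - int l1 \<ge> 0 \<and> b - int l1 < int a}) = 2 * int a - 1 - b"
    by simp
  then have "odd (card {l1::nat. l1 < a \<and> b - int l1 \<ge> 0 \<and> b - int l1 < int a}) \<longleftrightarrow> odd (2 * int a - 1 - b)"
    by (rule odd_int_eq)
  also have "\<dots> \<longleftrightarrow> even b" by presburger
  finally show ?thesis .
qed

lemma count_parity:
  fixes a::nat and b Y :: int
  assumes a: "a > 0" "0 \<le> b" "b < 2*int a"
  shows "odd (card {j::nat. j < a \<and> (\<exists>l1::nat. l1 < a \<and> b - int l1 \<ge> 0 \<and> b - int l1 < int a
            \<and> (Y + b - 2*int j - 2*int l1) mod (2*int a) = 0)}) \<longleftrightarrow> even Y \<and> even b"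
    (is "odd (card ?J) \<longleftrightarrow> _")
proof (cases "even (Y + b)")
  case False
  have nz: "(Y + b - 2*int j - 2*int l1) mod (2*int a) \<noteq> 0" for j l1 :: nat
  proof
    assume "(Y + b - 2*int j - 2*int l1) mod (2*int a) = 0"
    then have "2*int a dvd (Y + b - 2*int j - 2*int l1)" by (simp add: mod_eq_0_iff_dvd)
    then have "2 dvd (Y + b - 2*int j - 2*int l1)" using dvd_mult_left by blast
    then have "even (Y + b)" by simp
    with False show False by simp
  qed
  have "?J = {}" using nz by simp
  then have c0: "card ?J = 0" by (simp only: card.empty)
  have h: "\<not> (even Y \<and> even b)" using False by auto
  show ?thesis unfolding c0 using h by simp
next
  case True
  then obtain c where c: "Y + b = 2*c" by (rule evenE)
  let ?L = "{l1::nat. l1 < a \<and> b - int l1 \<ge> 0 \<and> b - int l1 < int a}"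
  define f where "f l1 = nat ((c - int l1) mod int a)" for l1 :: nat
  have key: "(Y + b - 2*int j - 2*int l1) mod (2*int a) = 0 \<longleftrightarrow> int j mod int a = (c - int l1) mod int a"
    for j l1 :: nat
  proof -
    have eq: "(Y + b - 2*int j - 2*int l1) = 2 * (c - int l1 - int j)" using c by simp
    have "(Y + b - 2*int j - 2*int l1) mod (2*int a) = 0 \<longleftrightarrow> 2 * int a dvd 2 * (c - int l1 - int j)"
      by (simp only: eq mod_eq_0_iff_dvd)
    also have "\<dots> \<longleftrightarrow> int a dvd (c - int l1 - int j)"
      by (rule dvd_times_left_cancel_iff) simp
    also have "\<dots> \<longleftrightarrow> int j mod int a = (c - int l1) mod int a"
    proof -
      have "int j - (c - int l1) = - (c - int l1 - int j)" by simp
      then show ?thesis by (simp only: mod_eq_dvd_iff dvd_minus_iff)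
    qed
    finally show ?thesis .
  qed
  have "?J = f ` ?L"
  proof (rule set_eqI, rule iffI)
    fix j assume "j \<in> ?J"
    then obtain l1 where l1: "l1 \<in> ?L" "(Y + b - 2*int j - 2*int l1) mod (2*int a) = 0" and j: "j < a"
      by auto
    have "int j = (c - int l1) mod int a" using key[of j l1] l1(2) j by simp
    then have "j = f l1" unfolding f_def by simp
    then show "j \<in> f ` ?L" using l1 by auto
  next
    fix j assume "j \<in> f ` ?L"
    then obtain l1 where l1: "l1 \<in> ?L" and jf: "j = f l1" by auto
    have ij: "int j = (c - int l1) mod int a" using jf a unfolding f_def by simp
    have "int j < int a" using ij a by simp
    then have "j < a" by simp
    moreover have "int j mod int a = (c - int l1) mod int a" using ij by simp
    ultimately show "j \<in> ?J" using l1 key[of j l1] by auto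
  qed
  moreover have "inj_on f ?L"
  proof (rule inj_onI)
    fix x y assume x: "x \<in> ?L" and y: "y \<in> ?L" and e: "f x = f y"
    have "(c - int x) mod int a = (c - int y) mod int a"
    proof -
      have "nat ((c - int x) mod int a) = nat ((c - int y) mod int a)" using e unfolding f_def .
      moreover have "0 \<le> (c - int x) mod int a" "0 \<le> (c - int y) mod int a" using a by simp_all
      ultimately show ?thesis using eq_nat_nat_iff by blast
    qed
    then have "int a dvd (int y - int x)" by (simp add: mod_eq_dvd_iff)
    have "int y - int x = 0"
    proof (rule ccontr)
      assume ne: "int y - int x \<noteq> 0"
      have "\<bar>int a\<bar> \<le> \<bar>int y - int x\<bar>" using dvd_imp_le_int[OF ne] \<open>int a dvd _\<close> by blast
      moreover have "\<bar>int y - int x\<bar> < int a" using x y by auto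
      ultimately show False by simp
    qed
    then show "x = y" by simp
  qed
  ultimately have "card ?J = card ?L" by (simp add: card_image)
  moreover have "even Y \<longleftrightarrow> even b" using True by simp
  ultimately show ?thesis using card_L_parity[OF a] by simp
qed



lemma lamG:
  fixes a \<beta> :: nat and t c :: int
  assumes a: "a > 0" and b: "\<beta> > 0"
  shows "(\<exists>l::nat. l < \<beta> \<and> t = (c + 2*int l*int a) mod (2*(int \<beta>*int a))) \<longleftrightarrow>
         (0 \<le> t \<and> t < 2*(int \<beta>*int a) \<and> (t - c) mod (2*int a) = 0)"
proof
  let ?N = "2*(int \<beta>*int a)"
  have Npos: "?N > 0" using a b by simp
  assume "\<exists>l::nat. l < \<beta> \<and> t = (c + 2*int l*int a) mod ?N"
  then obtain l::nat where l: "t = (c + 2*int l*int a) mod ?N" by blast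
  have r: "0 \<le> t" "t < ?N" using l Npos by simp_all
  have "t = (c + 2*int l*int a) - ?N * ((c + 2*int l*int a) div ?N)"
    using l by (simp add: minus_div_mult_eq_mod[symmetric])
  then have "t - c = (2*int a) * (int l - int \<beta> * ((c + 2*int l*int a) div ?N))"
    by (simp add: algebra_simps)
  then have "(t - c) mod (2*int a) = 0" by simp
  with r show "0 \<le> t \<and> t < ?N \<and> (t - c) mod (2*int a) = 0" by simp
next
  let ?N = "2*(int \<beta>*int a)"
  have Npos: "?N > 0" using a b by simp
  assume h: "0 \<le> t \<and> t < ?N \<and> (t - c) mod (2*int a) = 0"
  then obtain k where k: "t - c = (2*int a) * k" by (metis mod_eq_0_iff_dvd dvdE)
  define r where "r = (t - c) mod ?N"
  have "r = (t - c) - ?N * ((t - c) div ?N)" unfolding r_def by (simp add: minus_div_mult_eq_mod[symmetric])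
  then have "r = (2*int a) * (k - int \<beta> * ((t - c) div ?N))" using k by (simp add: algebra_simps)
  then obtain m where m: "r = (2*int a) * m" by blast
  have r0: "0 \<le> r" "r < ?N" unfolding r_def using Npos by simp_all
  have m0: "0 \<le> m" using r0(1) m a by (simp add: zero_le_mult_iff)
  have m1: "m < int \<beta>" using r0(2) m a by (simp add: mult_less_cancel_left)
  have "(c + 2*int (nat m)*int a) mod ?N = (c + r) mod ?N" using m m0 by (simp add: algebra_simps)
  also have "\<dots> = (c + (t - c)) mod ?N" unfolding r_def by (simp add: mod_add_right_eq)
  also have "\<dots> = t" using h by simp
  finally show "\<exists>l::nat. l < \<beta> \<and> t = (c + 2*int l*int a) mod ?N"
    using m0 m1 by (intro exI[of _ "nat m"]) simp
qed



lemma DxL_expl: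
  assumes g: "gpt i = (gx,gy,gz)"
  shows "p \<in> DxL ax ay az i j \<longleftrightarrow> (\<exists>l1 l2 m m' :: nat. l1 < gal ax ay az \<and> l2 < gal ax ay az
     \<and> m < ay div gal ax ay az \<and> m' < az div gal ax ay az \<and>
     p = red ax ay az (gx, (gy + 2*int j + int l1 - int l2) + 2*int m*int (gal ax ay az),
                          (gz + mu i * (int l1 + int l2)) + 2*int m'*int (gal ax ay az)))"
proof -
  define a where "a = gal ax ay az"
  have e: "padd (padd (gij i j) (padd (psc (2 * int m * int a) eyP) (psc (2 * int m' * int a) ezP)))
        (padd (psc (int l1) (padd (psc (mu i) ezP) eyP)) (psc (int l2) (padd (psc (mu i) ezP) eyM)))
      = (gx, (gy + 2*int j + int l1 - int l2) + 2*int m*int a, (gz + mu i * (int l1 + int l2)) + 2*int m'*int a)"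
    for m m' l1 l2 :: nat
    using g by (simp add: padd_def psc_def gij_def eyP_def eyM_def ezP_def algebra_simps)
  show ?thesis
    unfolding DxL_def Gx_def Let_def a_def[symmetric]
  proof
    assume "p \<in> red ax ay az ` {padd g (padd (psc (int l) (padd (psc (mu i) ezP) eyP)) (psc (int l') (padd (psc (mu i) ezP) eyM))) |g l l'.
        l < a \<and> l' < a \<and> g \<in> {padd (gij i j) (padd (psc (2 * int l * int a) eyP) (psc (2 * int l' * int a) ezP)) |l l'. l < ay div a \<and> l' < az div a}}"
    then obtain l1 l2 m m' where "l1 < a" "l2 < a" "m < ay div a" "m' < az div a"
      "p = red ax ay az (padd (padd (gij i j) (padd (psc (2 * int m * int a) eyP) (psc (2 * int m' * int a) ezP)))
        (padd (psc (int l1) (padd (psc (mu i) ezP) eyP)) (psc (int l2) (padd (psc (mu i) ezP) eyM))))"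
      by blast
    then show "\<exists>l1 l2 m m' :: nat. l1 < a \<and> l2 < a \<and> m < ay div a \<and> m' < az div a \<and>
     p = red ax ay az (gx, (gy + 2*int j + int l1 - int l2) + 2*int m*int a,
                          (gz + mu i * (int l1 + int l2)) + 2*int m'*int a)"
      unfolding e by blast
  next
    assume "\<exists>l1 l2 m m' :: nat. l1 < a \<and> l2 < a \<and> m < ay div a \<and> m' < az div a \<and>
     p = red ax ay az (gx, (gy + 2*int j + int l1 - int l2) + 2*int m*int a,
                          (gz + mu i * (int l1 + int l2)) + 2*int m'*int a)"
    then obtain l1 l2 m m' where h: "l1 < a" "l2 < a" "m < ay div a" "m' < az div a"
      "p = red ax ay az (padd (padd (gij i j) (padd (psc (2 * int m * int a) eyP) (psc (2 * int m' * int a) ezP)))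
        (padd (psc (int l1) (padd (psc (mu i) ezP) eyP)) (psc (int l2) (padd (psc (mu i) ezP) eyM))))"
      unfolding e by blast
    then show "p \<in> red ax ay az ` {padd g (padd (psc (int l) (padd (psc (mu i) ezP) eyP)) (psc (int l') (padd (psc (mu i) ezP) eyM))) |g l l'.
        l < a \<and> l' < a \<and> g \<in> {padd (gij i j) (padd (psc (2 * int l * int a) eyP) (psc (2 * int l' * int a) ezP)) |l l'. l < ay div a \<and> l' < az div a}}"
      by blast
  qed
qed



lemma gal_props:
  assumes "ax > 0" "ay > 0" "az > 0"
  shows "gal ax ay az > 0" "gal ax ay az dvd ax" "gal ax ay az dvd ay" "gal ax ay az dvd az"
  using assms unfolding gal_def
  by (auto intro: dvd_trans)

lemma DxL_char:
  assumes "ax > 1" "ay > 0" "az > 0" "i < 4" and g: "gpt i = (gx,gy,gz)"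
  shows "(x,y,z) \<in> DxL ax ay az i j \<longleftrightarrow> (x,y,z) \<in> Aset ax ay az \<and> x = gx \<and>
    (\<exists>l1 l2::nat. l1 < gal ax ay az \<and> l2 < gal ax ay az \<and>
       (y - (gy + 2*int j + int l1 - int l2)) mod (2*int (gal ax ay az)) = 0 \<and>
       (z - (gz + mu i * (int l1 + int l2))) mod (2*int (gal ax ay az)) = 0)"
proof -
  define a where "a = gal ax ay az"
  have ap: "a > 0" "a dvd ay" "a dvd az" using gal_props[of ax ay az] assms unfolding a_def by auto
  define by' where "by' = ay div a"
  define bz where "bz = az div a"
  have hy: "2*int ay = 2*(int by' * int a)" using ap unfolding by'_def by (simp flip: of_nat_mult)
  have hz: "2*int az = 2*(int bz * int a)" using ap unfolding bz_def by (simp flip: of_nat_mult)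
  have byp: "by' > 0" using ap assms unfolding by'_def by (metis dvd_mult_div_cancel mult_0_right neq0_conv)
  have bzp: "bz > 0" using ap assms unfolding bz_def by (metis dvd_mult_div_cancel mult_0_right neq0_conv)
  have gx: "gx \<in> {0,1}" using gpt_cases[OF assms(4)] g by simp
  have gxm: "gx mod (2*int ax) = gx" using gx assms(1) by auto
  have "(x,y,z) \<in> DxL ax ay az i j \<longleftrightarrow> (\<exists>l1 l2 :: nat. l1 < a \<and> l2 < a \<and> x = gx \<and>
     (\<exists>m. m < by' \<and> y = ((gy + 2*int j + int l1 - int l2) + 2*int m*int a) mod (2*(int by' * int a))) \<and>
     (\<exists>m'. m' < bz \<and> z = ((gz + mu i * (int l1 + int l2)) + 2*int m'*int a) mod (2*(int bz * int a))))"
    unfolding DxL_expl[OF g] a_def[symmetric] by'_def[symmetric] bz_def[symmetric]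
    by (simp add: red_triple gxm flip: hy hz) blast
  also have "\<dots> \<longleftrightarrow> (\<exists>l1 l2 :: nat. l1 < a \<and> l2 < a \<and> x = gx \<and>
     (0 \<le> y \<and> y < 2*int ay \<and> (y - (gy + 2*int j + int l1 - int l2)) mod (2*int a) = 0) \<and>
     (0 \<le> z \<and> z < 2*int az \<and> (z - (gz + mu i * (int l1 + int l2))) mod (2*int a) = 0))"
    unfolding lamG[OF ap(1) byp] lamG[OF ap(1) bzp] hy hz ..
  also have "\<dots> \<longleftrightarrow> (x,y,z) \<in> Aset ax ay az \<and> x = gx \<and>
    (\<exists>l1 l2::nat. l1 < a \<and> l2 < a \<and>
       (y - (gy + 2*int j + int l1 - int l2)) mod (2*int a) = 0 \<and>
       (z - (gz + mu i * (int l1 + int l2))) mod (2*int a) = 0)"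
    using gx assms(1) by (auto simp: Aset_iff mod_eq_0_iff_dvd)
  finally show ?thesis unfolding a_def .
qed



lemma DzL_expl:
  assumes g: "gpt i = (gx,gy,gz)"
  shows "p \<in> DzL ax ay az i j \<longleftrightarrow> (\<exists>l1 l2 m m' :: nat. l1 < gal ax ay az \<and> l2 < gal ax ay az
     \<and> m < ay div gal ax ay az \<and> m' < ax div gal ax ay az \<and>
     p = red ax ay az ((gx + nu i * (int l1 + int l2)) + 2*int m'*int (gal ax ay az), (gy + 2*int j + int l1 - int l2) + 2*int m*int (gal ax ay az), gz))"
proof -
  define a where "a = gal ax ay az"
  have e: "padd (padd (gij i j) (padd (psc (2 * int m * int a) eyP) (psc (2 * int m' * int a) exP)))
        (padd (psc (int l1) (padd (psc (nu i) exP) eyP)) (psc (int l2) (padd (psc (nu i) exP) eyM)))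
      = ((gx + nu i * (int l1 + int l2)) + 2*int m'*int a, (gy + 2*int j + int l1 - int l2) + 2*int m*int a, gz)"
    for m m' l1 l2 :: nat
    using g by (simp add: padd_def psc_def gij_def eyP_def eyM_def exP_def algebra_simps)
  show ?thesis
    unfolding DzL_def Gz_def Let_def a_def[symmetric]
  proof
    assume "p \<in> red ax ay az ` {padd g (padd (psc (int l) (padd (psc (nu i) exP) eyP)) (psc (int l') (padd (psc (nu i) exP) eyM))) |g l l'.
        l < a \<and> l' < a \<and> g \<in> {padd (gij i j) (padd (psc (2 * int l * int a) eyP) (psc (2 * int l' * int a) exP)) |l l'. l < ay div a \<and> l' < ax div a}}"
    then obtain l1 l2 m m' where "l1 < a" "l2 < a" "m < ay div a" "m' < ax div a"
      "p = red ax ay az (padd (padd (gij i j) (padd (psc (2 * int m * int a) eyP) (psc (2 * int m' * int a) exP)))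
        (padd (psc (int l1) (padd (psc (nu i) exP) eyP)) (psc (int l2) (padd (psc (nu i) exP) eyM))))"
      by blast
    then show "\<exists>l1 l2 m m' :: nat. l1 < a \<and> l2 < a \<and> m < ay div a \<and> m' < ax div a \<and>
     p = red ax ay az ((gx + nu i * (int l1 + int l2)) + 2*int m'*int a, (gy + 2*int j + int l1 - int l2) + 2*int m*int a, gz)"
      unfolding e by blast
  next
    assume "\<exists>l1 l2 m m' :: nat. l1 < a \<and> l2 < a \<and> m < ay div a \<and> m' < ax div a \<and>
     p = red ax ay az ((gx + nu i * (int l1 + int l2)) + 2*int m'*int a, (gy + 2*int j + int l1 - int l2) + 2*int m*int a, gz)"
    then obtain l1 l2 m m' where h: "l1 < a" "l2 < a" "m < ay div a" "m' < ax div a"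
      "p = red ax ay az (padd (padd (gij i j) (padd (psc (2 * int m * int a) eyP) (psc (2 * int m' * int a) exP)))
        (padd (psc (int l1) (padd (psc (nu i) exP) eyP)) (psc (int l2) (padd (psc (nu i) exP) eyM))))"
      unfolding e by blast
    then show "p \<in> red ax ay az ` {padd g (padd (psc (int l) (padd (psc (nu i) exP) eyP)) (psc (int l') (padd (psc (nu i) exP) eyM))) |g l l'.
        l < a \<and> l' < a \<and> g \<in> {padd (gij i j) (padd (psc (2 * int l * int a) eyP) (psc (2 * int l' * int a) exP)) |l l'. l < ay div a \<and> l' < ax div a}}"
      by blast
  qed
qed



lemma DzL_char:
  assumes "ax > 0" "ay > 0" "az > 1" "i < 4" and g: "gpt i = (gx,gy,gz)"
  shows "(x,y,z) \<in> DzL ax ay az i j \<longleftrightarrow> (x,y,z) \<in> Aset ax ay az \<and> z = gz \<and>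
    (\<exists>l1 l2::nat. l1 < gal ax ay az \<and> l2 < gal ax ay az \<and>
       (y - (gy + 2*int j + int l1 - int l2)) mod (2*int (gal ax ay az)) = 0 \<and>
       (x - (gx + nu i * (int l1 + int l2))) mod (2*int (gal ax ay az)) = 0)"
proof -
  define a where "a = gal ax ay az"
  have ap: "a > 0" "a dvd ay" "a dvd ax" using gal_props[of ax ay az] assms unfolding a_def by auto
  define by' where "by' = ay div a"
  define bx where "bx = ax div a"
  have hy: "2*int ay = 2*(int by' * int a)" using ap unfolding by'_def by (simp flip: of_nat_mult)
  have hx: "2*int ax = 2*(int bx * int a)" using ap unfolding bx_def by (simp flip: of_nat_mult)
  have byp: "by' > 0" using ap assms unfolding by'_def by (metis dvd_mult_div_cancel mult_0_right neq0_conv)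
  have bxp: "bx > 0" using ap assms unfolding bx_def by (metis dvd_mult_div_cancel mult_0_right neq0_conv)
  have gz: "gz \<in> {0,1}" using gpt_cases[OF assms(4)] g by simp
  have gzm: "gz mod (2*int az) = gz" using gz assms(3) by auto
  have "(x,y,z) \<in> DzL ax ay az i j \<longleftrightarrow> (\<exists>l1 l2 :: nat. l1 < a \<and> l2 < a \<and> z = gz \<and>
     (\<exists>m. m < by' \<and> y = ((gy + 2*int j + int l1 - int l2) + 2*int m*int a) mod (2*(int by' * int a))) \<and>
     (\<exists>m'. m' < bx \<and> x = ((gx + nu i * (int l1 + int l2)) + 2*int m'*int a) mod (2*(int bx * int a))))"
    unfolding DzL_expl[OF g] a_def[symmetric] by'_def[symmetric] bx_def[symmetric]
    by (simp add: red_triple gzm flip: hy hx) blast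
  also have "\<dots> \<longleftrightarrow> (\<exists>l1 l2 :: nat. l1 < a \<and> l2 < a \<and> z = gz \<and>
     (0 \<le> y \<and> y < 2*int ay \<and> (y - (gy + 2*int j + int l1 - int l2)) mod (2*int a) = 0) \<and>
     (0 \<le> x \<and> x < 2*int ax \<and> (x - (gx + nu i * (int l1 + int l2))) mod (2*int a) = 0))"
    unfolding lamG[OF ap(1) byp] lamG[OF ap(1) bxp] hy hx ..
  also have "\<dots> \<longleftrightarrow> (x,y,z) \<in> Aset ax ay az \<and> z = gz \<and>
    (\<exists>l1 l2::nat. l1 < a \<and> l2 < a \<and>
       (y - (gy + 2*int j + int l1 - int l2)) mod (2*int a) = 0 \<and>
       (x - (gx + nu i * (int l1 + int l2))) mod (2*int a) = 0)"
    using gz assms(3) by (auto simp: Aset_iff mod_eq_0_iff_dvd)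
  finally show ?thesis unfolding a_def .
qed



lemma zpart:
  fixes a :: nat and s z gz mu :: int
  assumes a: "a > 0" and mu: "mu * mu = 1" and s: "0 \<le> s" "s < 2*int a"
  shows "(z - (gz + mu * s)) mod (2*int a) = 0 \<longleftrightarrow> s = (mu*(z - gz)) mod (2*int a)"
proof -
  let ?x = "z - (gz + mu * s)"
  have e: "mu * ?x = mu*(z - gz) - s" using mu by (simp add: algebra_simps)
  have "?x mod (2*int a) = 0 \<longleftrightarrow> 2*int a dvd ?x" by (simp add: mod_eq_0_iff_dvd)
  also have "\<dots> \<longleftrightarrow> 2*int a dvd mu * ?x"
  proof
    assume "2*int a dvd ?x" then show "2*int a dvd mu * ?x" by (rule dvd_mult)
  next
    assume "2*int a dvd mu * ?x"
    then have "2*int a dvd mu * (mu * ?x)" by (rule dvd_mult)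
    moreover have "mu * (mu * ?x) = ?x"
    proof -
      have "mu * (mu * ?x) = (mu * mu) * ?x" by (rule mult.assoc[symmetric])
      also have "\<dots> = ?x" using mu by simp
      finally show ?thesis .
    qed
    ultimately show "2*int a dvd ?x" by simp
  qed
  also have "\<dots> \<longleftrightarrow> (mu*(z - gz)) mod (2*int a) = s mod (2*int a)"
    unfolding e by (simp only: mod_eq_dvd_iff)
  also have "s mod (2*int a) = s" using s by simp
  finally show ?thesis by (simp only: eq_commute)
qed

lemma red_pair:
  fixes a j :: nat and y gy z gz mu :: int
  assumes a: "a > 0" and mu: "mu * mu = 1"
  defines "b \<equiv> (mu*(z - gz)) mod (2*int a)"
  shows "(\<exists>l1 l2::nat. l1 < a \<and> l2 < a \<and> (y - (gy + 2*int j + int l1 - int l2)) mod (2*int a) = 0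
            \<and> (z - (gz + mu * (int l1 + int l2))) mod (2*int a) = 0)
    \<longleftrightarrow> (\<exists>l1::nat. l1 < a \<and> b - int l1 \<ge> 0 \<and> b - int l1 < int a
            \<and> ((y - gy) + b - 2*int j - 2*int l1) mod (2*int a) = 0)"
proof
  assume "\<exists>l1 l2::nat. l1 < a \<and> l2 < a \<and> (y - (gy + 2*int j + int l1 - int l2)) mod (2*int a) = 0
            \<and> (z - (gz + mu * (int l1 + int l2))) mod (2*int a) = 0"
  then obtain l1 l2 :: nat where "l1 < a \<and> l2 < a \<and> (y - (gy + 2*int j + int l1 - int l2)) mod (2*int a) = 0
    \<and> (z - (gz + mu * (int l1 + int l2))) mod (2*int a) = 0" by (elim exE) (erule that)
  then have l: "l1 < a" "l2 < a" "(y - (gy + 2*int j + int l1 - int l2)) mod (2*int a) = 0"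
    "(z - (gz + mu * (int l1 + int l2))) mod (2*int a) = 0" by simp_all
  have s0: "0 \<le> int l1 + int l2" "int l1 + int l2 < 2*int a" using l by simp_all
  have "int l1 + int l2 = b" unfolding b_def
    using zpart[OF a mu s0, of z gz] l(4) by simp
  then have l2: "int l2 = b - int l1" by simp
  have eqn: "y - (gy + 2*int j + int l1 - int l2) = (y - gy) + b - 2*int j - 2*int l1" using l2 by simp
  have m: "((y - gy) + b - 2*int j - 2*int l1) mod (2*int a) = 0" using l(3) by (simp only: eqn)
  have c1: "b - int l1 \<ge> 0" "b - int l1 < int a" using l2 l(2) by simp_all
  show "\<exists>l1::nat. l1 < a \<and> b - int l1 \<ge> 0 \<and> b - int l1 < int a
            \<and> ((y - gy) + b - 2*int j - 2*int l1) mod (2*int a) = 0"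
    by (intro exI[of _ l1] conjI l(1) c1 m)
next
  assume "\<exists>l1::nat. l1 < a \<and> b - int l1 \<ge> 0 \<and> b - int l1 < int a
            \<and> ((y - gy) + b - 2*int j - 2*int l1) mod (2*int a) = 0"
  then obtain l1 :: nat where "l1 < a \<and> b - int l1 \<ge> 0 \<and> b - int l1 < int a
     \<and> ((y - gy) + b - 2*int j - 2*int l1) mod (2*int a) = 0" by (elim exE) (erule that)
  then have l: "l1 < a" "b - int l1 \<ge> 0" "b - int l1 < int a"
     "((y - gy) + b - 2*int j - 2*int l1) mod (2*int a) = 0" by simp_all
  define l2 where "l2 = nat (b - int l1)"
  have l2i: "int l2 = b - int l1" unfolding l2_def using l by simp
  have l2a: "l2 < a" using l2i l by simp
  have bb: "0 \<le> b" "b < 2*int a" unfolding b_def using a by simp_all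
  have s0: "0 \<le> int l1 + int l2" "int l1 + int l2 < 2*int a" using l2i bb by simp_all
  have sb: "int l1 + int l2 = b" using l2i by simp
  have m1: "(z - (gz + mu * (int l1 + int l2))) mod (2*int a) = 0"
    using zpart[OF a mu s0, of z gz] sb unfolding b_def by simp
  have eqn: "y - (gy + 2*int j + int l1 - int l2) = (y - gy) + b - 2*int j - 2*int l1" using l2i by simp
  have m2: "(y - (gy + 2*int j + int l1 - int l2)) mod (2*int a) = 0" using l(4) by (simp only: eqn)
  show "\<exists>l1 l2::nat. l1 < a \<and> l2 < a \<and> (y - (gy + 2*int j + int l1 - int l2)) mod (2*int a) = 0
            \<and> (z - (gz + mu * (int l1 + int l2))) mod (2*int a) = 0"
    by (intro exI[of _ l1] exI[of _ l2] conjI l(1) l2a m1 m2)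
qed



lemma mu_sq: "mu i * mu i = 1" by (simp add: mu_def flip: power_mult_distrib)
lemma nu_sq: "nu i * nu i = 1" by (simp add: nu_def flip: power_mult_distrib)
lemma mu_odd: "odd (mu i)" by (simp add: mu_def)
lemma nu_odd: "odd (nu i)" by (simp add: nu_def)

lemma X_count:
  assumes "ax > 1" "ay > 0" "az > 0" "i < 4" and g: "gpt i = (gx,gy,gz)"
  shows "(x,y,z) \<in> DxHalf ax ay az i \<longleftrightarrow> odd (card {j \<in> set [0..<gal ax ay az]. (x,y,z) \<in> DxL ax ay az i j})"
proof -
  define a where "a = gal ax ay az"
  have ap: "a > 0" using gal_props[of ax ay az] assms unfolding a_def by auto
  show ?thesis
  proof (cases "(x,y,z) \<in> Aset ax ay az \<and> x = gx")
    case True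
    define b where "b = (mu i*(z - gz)) mod (2*int a)"
    have "{j \<in> set [0..<gal ax ay az]. (x,y,z) \<in> DxL ax ay az i j} =
      {j::nat. j < a \<and> (\<exists>l1::nat. l1 < a \<and> b - int l1 \<ge> 0 \<and> b - int l1 < int a
            \<and> ((y - gy) + b - 2*int j - 2*int l1) mod (2*int a) = 0)}"
      unfolding DxL_char[OF assms] a_def[symmetric] red_pair[OF ap mu_sq] b_def
      using True by auto
    then have "odd (card {j \<in> set [0..<gal ax ay az]. (x,y,z) \<in> DxL ax ay az i j}) \<longleftrightarrow> even (y - gy) \<and> even b"
      using count_parity[OF ap, of b "y - gy"] ap unfolding b_def by simp
    also have "even b \<longleftrightarrow> even (z - gz)" unfolding b_def by (simp add: even_mod2n mu_odd)
    finally show ?thesis unfolding DxHalf_char[OF assms] using True by auto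
  next
    case False
    have "{j \<in> set [0..<gal ax ay az]. (x,y,z) \<in> DxL ax ay az i j} = {}"
      unfolding DxL_char[OF assms] using False by auto
    then show ?thesis unfolding DxHalf_char[OF assms] card.empty using False by (simp only:) auto
  qed
qed

lemma Z_count:
  assumes "ax > 0" "ay > 0" "az > 1" "i < 4" and g: "gpt i = (gx,gy,gz)"
  shows "(x,y,z) \<in> DzHalf ax ay az i \<longleftrightarrow> odd (card {j \<in> set [0..<gal ax ay az]. (x,y,z) \<in> DzL ax ay az i j})"
proof -
  define a where "a = gal ax ay az"
  have ap: "a > 0" using gal_props[of ax ay az] assms unfolding a_def by auto
  show ?thesis
  proof (cases "(x,y,z) \<in> Aset ax ay az \<and> z = gz")
    case True
    define b where "b = (nu i*(x - gx)) mod (2*int a)"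
    have "{j \<in> set [0..<gal ax ay az]. (x,y,z) \<in> DzL ax ay az i j} =
      {j::nat. j < a \<and> (\<exists>l1::nat. l1 < a \<and> b - int l1 \<ge> 0 \<and> b - int l1 < int a
            \<and> ((y - gy) + b - 2*int j - 2*int l1) mod (2*int a) = 0)}"
      unfolding DzL_char[OF assms] a_def[symmetric] red_pair[OF ap nu_sq] b_def
      using True by auto
    then have "odd (card {j \<in> set [0..<gal ax ay az]. (x,y,z) \<in> DzL ax ay az i j}) \<longleftrightarrow> even (y - gy) \<and> even b"
      using count_parity[OF ap, of b "y - gy"] ap unfolding b_def by simp
    also have "even b \<longleftrightarrow> even (x - gx)" unfolding b_def by (simp add: even_mod2n nu_odd)
    finally show ?thesis unfolding DzHalf_char[OF assms] using True by auto
  next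
    case False
    have "{j \<in> set [0..<gal ax ay az]. (x,y,z) \<in> DzL ax ay az i j} = {}"
      unfolding DzL_char[OF assms] using False by auto
    then show ?thesis unfolding DzHalf_char[OF assms] card.empty using False by (simp only:) auto
  qed
qed



theorem corollary3:
  fixes ax ay az \<alpha> :: nat
  assumes "ax > 1" and "ay > 1" and "az > 1"
    and "\<alpha> = gcd (gcd ax ay) az"
    and "odd (ay div \<alpha>)"
  shows "\<forall>i < 4.
     (\<forall>s \<in> Aset ax ay az - Dset ax ay az.
         pcommute (Xres (DxHalf ax ay az i)) (Sgen ax ay az s)
       \<and> pcommute (Zres (DzHalf ax ay az i)) (Sgen ax ay az s))
   \<and> (\<exists>S \<in> stab ax ay az.
         Xres (DxHalf ax ay az i) = pmult (pprod (map (\<lambda>j. XL ax ay az i j) [0..<\<alpha>])) S)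
   \<and> (\<exists>S \<in> stab ax ay az.
         Zres (DzHalf ax ay az i) = pmult (pprod (map (\<lambda>j. ZL ax ay az i j) [0..<\<alpha>])) S)"
proof (intro allI impI conjI)
  have gal: "gal ax ay az = \<alpha>" using assms(4) by (simp add: gal_def)
  have p: "ax > 0" "ay > 0" "az > 0" using assms by auto
  fix i :: nat assume i: "i < 4"
  obtain gx gy gz where g: "gpt i = (gx,gy,gz)" by (cases "gpt i") auto
  show "\<forall>s \<in> Aset ax ay az - Dset ax ay az.
         pcommute (Xres (DxHalf ax ay az i)) (Sgen ax ay az s)
       \<and> pcommute (Zres (DzHalf ax ay az i)) (Sgen ax ay az s)"
    using commute_X[OF assms(1-3) i] commute_Z[OF assms(1-3) i] by blast
  have hX: "DxHalf ax ay az i = foldr (\<lambda>j acc. symdiff (DxL ax ay az i j) acc) [0..<\<alpha>] {}"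
  proof (rule set_eqI)
    fix q :: pt
    obtain x y z where q: "q = (x,y,z)" by (cases q) auto
    show "q \<in> DxHalf ax ay az i \<longleftrightarrow> q \<in> foldr (\<lambda>j acc. symdiff (DxL ax ay az i j) acc) [0..<\<alpha>] {}"
      unfolding q foldr_symdiff_mem[OF distinct_upt] X_count[OF assms(1) p(2,3) i g] gal ..
  qed
  have hZ: "DzHalf ax ay az i = foldr (\<lambda>j acc. symdiff (DzL ax ay az i j) acc) [0..<\<alpha>] {}"
  proof (rule set_eqI)
    fix q :: pt
    obtain x y z where q: "q = (x,y,z)" by (cases q) auto
    show "q \<in> DzHalf ax ay az i \<longleftrightarrow> q \<in> foldr (\<lambda>j acc. symdiff (DzL ax ay az i j) acc) [0..<\<alpha>] {}"
      unfolding q foldr_symdiff_mem[OF distinct_upt] Z_count[OF p(1,2) assms(3) i g] gal ..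
  qed
  show "\<exists>S \<in> stab ax ay az.
         Xres (DxHalf ax ay az i) = pmult (pprod (map (\<lambda>j. XL ax ay az i j) [0..<\<alpha>])) S"
  proof (rule bexI[of _ pone])
    show "pone \<in> stab ax ay az" by (rule stab.stab_one)
    show "Xres (DxHalf ax ay az i) = pmult (pprod (map (\<lambda>j. XL ax ay az i j) [0..<\<alpha>])) pone"
      unfolding XL_def pprod_Xres pmult_Xres_one hX ..
  qed
  show "\<exists>S \<in> stab ax ay az.
         Zres (DzHalf ax ay az i) = pmult (pprod (map (\<lambda>j. ZL ax ay az i j) [0..<\<alpha>])) S"
  proof (rule bexI[of _ pone])
    show "pone \<in> stab ax ay az" by (rule stab.stab_one)
    show "Zres (DzHalf ax ay az i) = pmult (pprod (map (\<lambda>j. ZL ax ay az i j) [0..<\<alpha>])) pone"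
      unfolding ZL_def pprod_Zres pmult_Zres_one hZ ..
  qed
qed

end
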